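(* Let $\epsilon\in(0,1)$, let $m\ge 1$ and $f\in\mathbb R_+^m$ (entrywise nonnegative), and set $L:=\frac{2}{\epsilon}-1$. Then the function $z\mapsto\mathcal G_\epsilon(z;f)$ on $\mathbb C^m$ is continuously differentiable and its gradient is Lipschitz continuous with constant $L$: $$\|\nabla_z\mathcal G_\epsilon(z;f)-\nabla_z\mathcal G_\epsilon(y;f)\|\le L\|z-y\|\qquad\forall\, z,y\in\mathbb C^m.$$
   Context: For $x\in\mathbb C$ and $b\ge 0$, the smooth truncated amplitude-Gaussian metric is built from $$g_\epsilon(x;b):=\begin{cases}\frac{1-\epsilon}{2}\left(b-\frac{1}{\epsilon}|x|^2\right), & \text{if } |x|<\epsilon\sqrt b,\\[2pt] \frac12\big(|x|-\sqrt b\big)^2, & \text{otherwise,}\end{cases}$$ and for $z\in\mathbb C^m$, $f\in\mathbb R_+^m$, $\mathcal G_\epsilon(z;f):=\sum_{j}g_\epsilon(z(j);f(j))$. Real-valued functions of complex vectors are differentiated by identifying $\mathbb C^m$ with $\mathbb R^{2m}$ (real and imaginary parts); the gradient is the real gradient written back as a complex vector (so e.g. $\nabla_x\frac12(|x|-\sqrt b)^2=(1-\sqrt b/|x|)x$ for $x\neq0$). $\|\cdot\|$ is the Euclidean ($\ell^2$) norm. *)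

theory Defs
  imports "HOL-Analysis.Analysis"
begin

definition g_eps :: "real \<Rightarrow> complex \<Rightarrow> real \<Rightarrow> real" where
  "g_eps \<epsilon> x b =
     (if cmod x < \<epsilon> * sqrt b then (1 - \<epsilon>) / 2 * (b - (1 / \<epsilon>) * (cmod x)\<^sup>2)
      else (1 / 2) * (cmod x - sqrt b)\<^sup>2)"

text \<open>Sum over coordinates; C^m is complex ^ 'm (finite index type 'm), with the
  real Euclidean structure of R^(2m).\<close>
definition G_eps :: "real \<Rightarrow> complex ^ 'm::finite \<Rightarrow> real ^ 'm \<Rightarrow> real" where
  "G_eps \<epsilon> z f = (\<Sum>j\<in>UNIV. g_eps \<epsilon> (z $ j) (f $ j))"

end

theory Submission
  imports Defs
begin


lemma gd_sq: "GDERIV (\<lambda>y::'a::real_inner. (norm y)^2) x :> (2::real) *\<^sub>R x"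
proof -
  have "GDERIV (\<lambda>y::'a. inner y y) x :> 2 *\<^sub>R x"
    unfolding gderiv_def
    by (rule has_derivative_subst, rule has_derivative_inner[OF has_derivative_ident has_derivative_ident])
       (auto simp: inner_commute fun_eq_iff algebra_simps)
  then show ?thesis by (simp add: power2_norm_eq_inner)
qed

lemma q1_deriv:
  fixes e b :: real
  assumes "e > 0"
  shows "GDERIV (\<lambda>y::'a::real_inner. (1 - e) / 2 * (b - (1/e) * (norm y)^2)) x :> (1 - 1/e) *\<^sub>R x"
proof -
  have "GDERIV (\<lambda>y::'a. (1 - e) / 2 * (b - (1/e) * (norm y)^2)) x :> ((1 - e) / 2 * (- (1/e))) *\<^sub>R ((2::real) *\<^sub>R x)"
    using gd_sq[of x] assms unfolding gderiv_def
    by (auto intro!: derivative_eq_intros simp: field_simps fun_eq_iff inner_commute)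
  moreover have "((1 - e) / 2 * (- (1/e))) *\<^sub>R ((2::real) *\<^sub>R x) = (1 - 1/e) *\<^sub>R x"
  proof -
    have "(1 - e) / 2 * (- (1/e)) * 2 = 1 - 1/e" using assms by (simp add: field_simps)
    then show ?thesis by (simp only: scaleR_scaleR)
  qed
  ultimately show ?thesis by simp
qed

lemma q2_deriv:
  fixes s :: real
  assumes "x \<noteq> 0"
  shows "GDERIV (\<lambda>y::'a::real_inner. 1/2 * (norm y - s)^2) x :> (1 - s / norm x) *\<^sub>R x"
proof -
  have "GDERIV (\<lambda>y::'a. 1/2 * (norm y - s)^2) x :> (norm x - s) *\<^sub>R sgn x"
    using GDERIV_norm[OF assms] unfolding gderiv_def
    by (auto intro!: derivative_eq_intros simp: field_simps fun_eq_iff inner_diff_right)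
  moreover have "(norm x - s) *\<^sub>R sgn x = (1 - s / norm x) *\<^sub>R x"
    using assms by (simp add: sgn_div_norm field_simps)
  ultimately show ?thesis by simp
qed

lemma glue_deriv:
  fixes f q1 q2 :: "'a::real_normed_vector \<Rightarrow> 'b::real_normed_vector"
  assumes d1: "(q1 has_derivative D) (at x)" and d2: "(q2 has_derivative D) (at x)"
    and "q1 x = f x" "q2 x = f x" and cases: "\<And>y. f y = q1 y \<or> f y = q2 y"
  shows "(f has_derivative D) (at x)"
proof -
  from d1 have bl: "bounded_linear D" and l1: "(\<lambda>h. norm (q1 (x + h) - q1 x - D h) / norm h) \<midarrow>0\<rightarrow> 0"
    unfolding has_derivative_at by auto
  from d2 have l2: "(\<lambda>h. norm (q2 (x + h) - q2 x - D h) / norm h) \<midarrow>0\<rightarrow> 0"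
    unfolding has_derivative_at by auto
  have "(\<lambda>h. norm (f (x + h) - f x - D h) / norm h) \<midarrow>0\<rightarrow> 0"
  proof (rule Lim_null_comparison)
    show "((\<lambda>h. norm (q1 (x + h) - q1 x - D h) / norm h + norm (q2 (x + h) - q2 x - D h) / norm h) \<longlongrightarrow> 0) (at 0)"
      using tendsto_add[OF l1 l2] by simp
    show "\<forall>\<^sub>F h in at 0. norm (norm (f (x + h) - f x - D h) / norm h) \<le> norm (q1 (x + h) - q1 x - D h) / norm h + norm (q2 (x + h) - q2 x - D h) / norm h"
    proof (rule always_eventually, rule allI)
      fix h
      show "norm (norm (f (x + h) - f x - D h) / norm h) \<le> norm (q1 (x + h) - q1 x - D h) / norm h + norm (q2 (x + h) - q2 x - D h) / norm h"
        using cases[of "x+h"] assms(3,4) by auto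
    qed
  qed
  with bl show ?thesis unfolding has_derivative_at by auto
qed

definition pr :: "real \<Rightarrow> 'a::real_normed_vector \<Rightarrow> 'a" where
  "pr r x = (if norm x \<le> r then x else (r / norm x) *\<^sub>R x)"

lemma pr_norm: "0 \<le> r \<Longrightarrow> norm (pr r x) \<le> r"
  by (auto simp: pr_def)

lemma pr_vi:
  fixes x z :: "'a::real_inner"
  assumes "0 \<le> r" "norm z \<le> r"
  shows "inner (x - pr r x) (z - pr r x) \<le> 0"
proof (cases "norm x \<le> r")
  case True then show ?thesis by (simp add: pr_def)
next
  case False
  then have nx: "norm x > r" "norm x > 0" using assms by auto
  have e1: "x - pr r x = (1 - r / norm x) *\<^sub>R x" using False by (simp add: pr_def algebra_simps)
  have "inner x z \<le> norm x * norm z" by (rule norm_cauchy_schwarz)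
  also have "\<dots> \<le> norm x * r" using assms nx by (simp add: mult_left_mono)
  finally have a: "inner x z \<le> norm x * r" .
  have b: "inner x (pr r x) = r * norm x" using False nx
    by (simp add: pr_def power2_norm_eq_inner[symmetric] power2_eq_square)
  have c: "0 \<le> 1 - r / norm x" using nx by simp
  have "inner (x - pr r x) (z - pr r x) = (1 - r / norm x) * (inner x z - inner x (pr r x))"
    by (simp add: e1 inner_diff_right right_diff_distrib)
  also have "\<dots> \<le> 0" using a b c by (simp add: mult_nonneg_nonpos mult.commute)
  finally show ?thesis .
qed

lemma pr_nonexp:
  fixes x y :: "'a::real_inner"
  assumes "0 \<le> r"
  shows "norm ((x - pr r x) - (y - pr r y)) \<le> norm (x - y)"
proof -
  define u where "u = x - y"
  define v where "v = pr r x - pr r y"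
  have 1: "inner (x - pr r x) (pr r y - pr r x) \<le> 0" using pr_vi[OF assms pr_norm[OF assms]] .
  have 2: "inner (y - pr r y) (pr r x - pr r y) \<le> 0" using pr_vi[OF assms pr_norm[OF assms]] .
  have "inner (x - pr r x) (pr r y - pr r x) + inner (y - pr r y) (pr r x - pr r y) = - inner (u - v) v"
    unfolding u_def v_def by (simp add: inner_diff_left inner_diff_right algebra_simps)
  with 1 2 have 3: "inner u v \<ge> inner v v" by (simp add: inner_diff_left)
  have "(norm ((x - pr r x) - (y - pr r y)))^2 = (norm (u - v))^2"
    unfolding u_def v_def by (simp add: algebra_simps)
  also have "\<dots> = inner u u - 2 * inner u v + inner v v"
    by (simp add: power2_norm_eq_inner inner_diff_left inner_diff_right inner_commute)
  also have "\<dots> \<le> inner u u" using 3 inner_ge_zero[of v] by linarith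
  also have "\<dots> = (norm (x - y))^2" by (simp add: u_def power2_norm_eq_inner)
  finally have "(norm ((x - pr r x) - (y - pr r y)))^2 \<le> (norm (x - y))^2" .
  then show ?thesis by (rule power2_le_imp_le) simp
qed


definition hg :: "real \<Rightarrow> real \<Rightarrow> complex \<Rightarrow> complex" where
  "hg e b x = x - (1/e) *\<^sub>R pr (e * sqrt b) x"

lemma hg_lip:
  assumes "0 < e" "e < 1" "0 \<le> b"
  shows "norm (hg e b x - hg e b y) \<le> (2/e - 1) * norm (x - y)"
proof -
  let ?r = "e * sqrt b"
  have r: "0 \<le> ?r" using assms by simp
  have eq: "hg e b x - hg e b y = (1 - 1/e) *\<^sub>R (x - y) + (1/e) *\<^sub>R ((x - pr ?r x) - (y - pr ?r y))"
    unfolding hg_def by (simp add: algebra_simps)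
  have "norm (hg e b x - hg e b y) \<le> norm ((1 - 1/e) *\<^sub>R (x - y)) + norm ((1/e) *\<^sub>R ((x - pr ?r x) - (y - pr ?r y)))"
    unfolding eq by (rule norm_triangle_ineq)
  also have "\<dots> = (1/e - 1) * norm (x - y) + (1/e) * norm ((x - pr ?r x) - (y - pr ?r y))"
  proof -
    have "\<bar>1 - 1/e\<bar> = 1/e - 1" using assms by (simp add: field_simps)
    then show ?thesis using assms by simp
  qed
  also have "\<dots> \<le> (1/e - 1) * norm (x - y) + (1/e) * norm (x - y)"
    using pr_nonexp[OF r, of x y] assms by (simp add: divide_right_mono)
  also have "\<dots> = (2/e - 1) * norm (x - y)" by (simp add: field_simps)
  finally show ?thesis .
qed

lemma g_deriv:
  assumes "0 < e" "e < 1" "0 \<le> b"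
  shows "GDERIV (\<lambda>y. g_eps e y b) x :> hg e b x"
proof (cases "b = 0")
  case True
  have fe: "(\<lambda>y. g_eps e y b) = (\<lambda>y. 1/2 * (norm y)^2)"
    using True by (auto simp: g_eps_def fun_eq_iff)
  have "pr 0 x = 0" by (simp add: pr_def)
  then have "hg e b x = (1/2 * 2) *\<^sub>R x" using True by (simp add: hg_def)
  moreover have "GDERIV (\<lambda>y::complex. 1/2 * (norm y)^2) x :> (1/2 * 2) *\<^sub>R x"
    using gd_sq[of x] unfolding gderiv_def
    by (auto intro!: derivative_eq_intros simp: fun_eq_iff inner_commute)
  ultimately show ?thesis using fe by simp
next
  case False
  define s where "s = sqrt b"
  have s: "s > 0" "s^2 = b" using False assms by (auto simp: s_def)
  define r where "r = e * s"
  have r: "r > 0" using s assms by (simp add: r_def)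
  define q1 where "q1 = (\<lambda>y::complex. (1 - e) / 2 * (b - (1/e) * (norm y)^2))"
  define q2 where "q2 = (\<lambda>y::complex. 1/2 * (norm y - s)^2)"
  have gq1: "g_eps e y b = q1 y" if "norm y < r" for y
    using that by (simp add: g_eps_def q1_def r_def s_def)
  have gq2: "g_eps e y b = q2 y" if "\<not> norm y < r" for y
    using that by (simp add: g_eps_def q2_def r_def s_def)
  have hg_in: "hg e b x = (1 - 1/e) *\<^sub>R x" if "norm x \<le> r"
    using that by (simp add: hg_def pr_def r_def s_def algebra_simps)
  have hg_out: "hg e b x = (1 - s / norm x) *\<^sub>R x" if "norm x \<ge> r"
  proof (cases "norm x = r")
    case True
    then have "s / norm x = 1 / e" using r s assms by (simp add: r_def)
    then show ?thesis using hg_in True by simp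
  next
    case False
    then have "norm x > r" using that by simp
    then have "hg e b x = x - (1/e * (r / norm x)) *\<^sub>R x"
      by (simp add: hg_def pr_def r_def s_def)
    moreover have "1/e * (r / norm x) = s / norm x" using assms by (simp add: r_def)
    ultimately show ?thesis by (simp add: algebra_simps)
  qed
  consider "norm x < r" | "norm x > r" | "norm x = r" by linarith
  then show ?thesis
  proof cases
    case 1
    have "GDERIV q1 x :> (1 - 1/e) *\<^sub>R x" unfolding q1_def by (rule q1_deriv[OF assms(1)])
    then have "GDERIV (\<lambda>y. g_eps e y b) x :> (1 - 1/e) *\<^sub>R x"
      unfolding gderiv_def
      by (rule has_derivative_transform_within_open[where s="ball 0 r"]) (use 1 gq1 in auto)
    then show ?thesis using hg_in 1 by simp
  next
    case 2
    have x0: "x \<noteq> 0" using 2 r by auto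
    have "GDERIV q2 x :> (1 - s / norm x) *\<^sub>R x" unfolding q2_def by (rule q2_deriv[OF x0])
    then have "GDERIV (\<lambda>y. g_eps e y b) x :> (1 - s / norm x) *\<^sub>R x"
      unfolding gderiv_def
      by (rule has_derivative_transform_within_open[where s="- cball 0 r"]) (use 2 gq2 in auto)
    then show ?thesis using hg_out 2 by simp
  next
    case 3
    have x0: "x \<noteq> 0" using 3 r by auto
    have d1: "GDERIV q1 x :> (1 - 1/e) *\<^sub>R x" unfolding q1_def by (rule q1_deriv[OF assms(1)])
    have "s / norm x = 1 / e" using 3 r s assms by (simp add: r_def)
    then have d2: "GDERIV q2 x :> (1 - 1/e) *\<^sub>R x" unfolding q2_def using q2_deriv[OF x0, of s] by simp
    have v2: "q2 x = g_eps e x b" using gq2 3 by simp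
    have "q1 x = (1 - e) / 2 * (s^2 - (1/e) * (e * s)^2)" using 3 s by (simp add: q1_def r_def)
    also have "\<dots> = 1/2 * (e * s - s)^2" using assms by (simp add: field_simps power2_eq_square)
    also have "\<dots> = q2 x" using 3 by (simp add: q2_def r_def)
    finally have v1: "q1 x = g_eps e x b" using v2 by simp
    have "GDERIV (\<lambda>y. g_eps e y b) x :> (1 - 1/e) *\<^sub>R x"
      unfolding gderiv_def
      by (rule glue_deriv[where f="\<lambda>y. g_eps e y b", OF d1[unfolded gderiv_def] d2[unfolded gderiv_def] v1 v2])
         (use gq1 gq2 in blast)
    then show ?thesis using hg_in 3 by simp
  qed
qed

theorem lemma2p1:
  fixes \<epsilon> :: real and f :: "real ^ 'm::finite"
  assumes "0 < \<epsilon>" and "\<epsilon> < 1"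
    and "\<forall>j. 0 \<le> f $ j"
  shows "\<exists>grad :: complex ^ 'm \<Rightarrow> complex ^ 'm.
           (\<forall>z. GDERIV (\<lambda>w. G_eps \<epsilon> w f) z :> grad z)
         \<and> continuous_on UNIV grad
         \<and> (\<forall>z y. norm (grad z - grad y) \<le> (2 / \<epsilon> - 1) * norm (z - y))"
proof -
  define grad where "grad = (\<lambda>z::complex^'m. \<chi> j. hg \<epsilon> (f $ j) (z $ j))"
  have D: "GDERIV (\<lambda>w. G_eps \<epsilon> w f) z :> grad z" for z
  proof -
    have "((\<lambda>w. \<Sum>j\<in>UNIV. g_eps \<epsilon> (w $ j) (f $ j)) has_derivative
          (\<lambda>h. \<Sum>j\<in>UNIV. inner (h $ j) (hg \<epsilon> (f $ j) (z $ j)))) (at z)"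
    proof (rule has_derivative_sum)
      fix j :: 'm
      have 1: "((\<lambda>w::complex^'m. w $ j) has_derivative (\<lambda>h. h $ j)) (at z)"
        by (rule bounded_linear_imp_has_derivative[OF bounded_linear_vec_nth])
      have 2: "((\<lambda>y. g_eps \<epsilon> y (f $ j)) has_derivative (\<lambda>h. inner h (hg \<epsilon> (f $ j) (z $ j)))) (at (z $ j))"
        using g_deriv[OF assms(1,2), of "f $ j" "z $ j"] assms(3) unfolding gderiv_def by simp
      show "((\<lambda>w. g_eps \<epsilon> (w $ j) (f $ j)) has_derivative (\<lambda>h. inner (h $ j) (hg \<epsilon> (f $ j) (z $ j)))) (at z)"
        using has_derivative_compose[OF 1 2] by simp
    qed
    then show ?thesis unfolding gderiv_def G_eps_def grad_def by (simp add: inner_vec_def)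
  qed
  have L: "norm (grad z - grad y) \<le> (2 / \<epsilon> - 1) * norm (z - y)" for z y
  proof -
    have L0: "0 \<le> 2 / \<epsilon> - 1" using assms by (simp add: field_simps)
    have "norm (grad z - grad y) = L2_set (\<lambda>j. norm (hg \<epsilon> (f $ j) (z $ j) - hg \<epsilon> (f $ j) (y $ j))) UNIV"
      by (simp add: norm_vec_def grad_def)
    also have "\<dots> \<le> L2_set (\<lambda>j. (2 / \<epsilon> - 1) * norm (z $ j - y $ j)) UNIV"
      by (rule L2_set_mono) (use hg_lip[OF assms(1,2)] assms(3) in auto)
    also have "\<dots> = (2 / \<epsilon> - 1) * norm (z - y)"
      by (simp add: norm_vec_def L2_set_right_distrib[OF L0])
    finally show ?thesis .
  qed
  have C: "continuous_on UNIV grad"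
  proof (rule lipschitz_on_continuous_on)
    show "(2 / \<epsilon> - 1)-lipschitz_on UNIV grad"
      by (rule lipschitz_onI) (use L assms in \<open>auto simp: dist_norm field_simps\<close>)
  qed
  show ?thesis using D C L by blast
qed

end
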